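(* Let $X$ be a real reflexive Banach space and let $h\in\mathcal{H}$ satisfy $h^{\ast}\circ i\le h$. Assume that $\mathrm{dom}(h)=\mathrm{dom}(h^{\ast}\circ i)$. Then $(\mathcal{A}^{\infty}h)^{\ast}\circ i=\mathcal{A}^{\infty}h$.
   Context: $X^{\ast}$ is the dual of $X$ with pairing $\langle\cdot,\cdot\rangle$. The dual of $X\times X^{\ast}$ is identified with $X^{\ast}\times X$ via $\langle (x,x^{\ast}),(y^{\ast},y)\rangle=\langle x,y^{\ast}\rangle+\langle y,x^{\ast}\rangle$; for $g:X\times X^{\ast}\to\mathbb{R}\cup\{+\infty\}$, $g^{\ast}(y^{\ast},y)=\sup_{(x,x^{\ast})}\{\langle x,y^{\ast}\rangle+\langle y,x^{\ast}\rangle-g(x,x^{\ast})\}$, and $i(x,x^{\ast})=(x^{\ast},x)$. For a maximally monotone $T:X\rightrightarrows X^{\ast}$, $\mathcal{H}(T)$ is the family of lower semicontinuous convex functions $h:X\times X^{\ast}\to\mathbb{R}\cup\{+\infty\}$ with $h(x,x^{\ast})\ge\langle x,x^{\ast}\rangle$ everywhere and $h(x,x^{\ast})=\langle x,x^{\ast}\rangle$ whenever $x^{\ast}\in T(x)$; $\mathcal{H}$ is the union of $\mathcal{H}(T)$ over all maximally monotone $T$. $\mathcal{A}h:=\tfrac12(h+h^{\ast}\circ i)$, $\mathcal{A}^n$ is its $n$-th iterate, and $\mathcal{A}^{\infty}h$ is the pointwise limit (equivalently infimum) of the pointwise non-increasing sequence $\{\mathcal{A}^n h\}_{n\ge1}$.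 $\mathrm{dom}(g)=\{z:g(z)<+\infty\}$. *)

theory Defs
  imports "HOL-Analysis.Analysis"
begin

text \<open>X is modelled by a type 'a of class banach (real Banach space);
  its dual X* is the type ('a \<Rightarrow>L real) of bounded linear functionals,
  and the pairing <x, x*> is blinfun_apply x* x.\<close>

definition reflexive_space :: "'a::banach itself \<Rightarrow> bool" where
  "reflexive_space _ \<longleftrightarrow>
     (\<forall>\<phi> :: ('a \<Rightarrow>\<^sub>L real) \<Rightarrow>\<^sub>L real. \<exists>x::'a. \<forall>f. blinfun_apply \<phi> f = blinfun_apply f x)"

definition pairing :: "'a::real_normed_vector \<times> ('a \<Rightarrow>\<^sub>L real) \<Rightarrow> ereal" where
  "pairing z = ereal (blinfun_apply (snd z) (fst z))"

definition monotone_op :: "('a::real_normed_vector \<Rightarrow> ('a \<Rightarrow>\<^sub>L real) set) \<Rightarrow> bool" where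
  "monotone_op T \<longleftrightarrow> (\<forall>x y xs ys. xs \<in> T x \<longrightarrow> ys \<in> T y \<longrightarrow>
       blinfun_apply (xs - ys) (x - y) \<ge> 0)"

definition maximally_monotone :: "('a::real_normed_vector \<Rightarrow> ('a \<Rightarrow>\<^sub>L real) set) \<Rightarrow> bool" where
  "maximally_monotone T \<longleftrightarrow> monotone_op T \<and>
     (\<forall>S. monotone_op S \<and> (\<forall>x. T x \<subseteq> S x) \<longrightarrow> S = T)"

definition lsc_ereal :: "('b::topological_space \<Rightarrow> ereal) \<Rightarrow> bool" where
  "lsc_ereal g \<longleftrightarrow> (\<forall>c::real. closed {z. g z \<le> ereal c})"

definition convex_ereal :: "('b::real_vector \<Rightarrow> ereal) \<Rightarrow> bool" where
  "convex_ereal g \<longleftrightarrow> (\<forall>z w (t::real). 0 \<le> t \<and> t \<le> 1 \<longrightarrow>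
       g ((1 - t) *\<^sub>R z + t *\<^sub>R w) \<le> ereal (1 - t) * g z + ereal t * g w)"

definition fitz_family :: "('a::real_normed_vector \<Rightarrow> ('a \<Rightarrow>\<^sub>L real) set)
     \<Rightarrow> ('a \<times> ('a \<Rightarrow>\<^sub>L real) \<Rightarrow> ereal) set" where
  "fitz_family T = {h. lsc_ereal h \<and> convex_ereal h \<and> (\<forall>z. h z \<ge> pairing z) \<and>
       (\<forall>x xs. xs \<in> T x \<longrightarrow> h (x, xs) = pairing (x, xs))}"

definition fitz_all :: "('a::real_normed_vector \<times> ('a \<Rightarrow>\<^sub>L real) \<Rightarrow> ereal) set" where
  "fitz_all = {h. \<exists>T. maximally_monotone T \<and> h \<in> fitz_family T}"

definition fconj :: "('a::real_normed_vector \<times> ('a \<Rightarrow>\<^sub>L real) \<Rightarrow> ereal)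
     \<Rightarrow> ('a \<Rightarrow>\<^sub>L real) \<times> 'a \<Rightarrow> ereal" where
  "fconj g = (\<lambda>(ys, y). SUP z \<in> UNIV.
       ereal (blinfun_apply ys (fst z) + blinfun_apply (snd z) y) - g z)"

definition iswap :: "'a \<times> 'b \<Rightarrow> 'b \<times> 'a" where
  "iswap z = (snd z, fst z)"

definition Aop :: "('a::real_normed_vector \<times> ('a \<Rightarrow>\<^sub>L real) \<Rightarrow> ereal)
     \<Rightarrow> 'a \<times> ('a \<Rightarrow>\<^sub>L real) \<Rightarrow> ereal" where
  "Aop h = (\<lambda>z. (h z + (fconj h \<circ> iswap) z) / 2)"

definition Ainf :: "('a::real_normed_vector \<times> ('a \<Rightarrow>\<^sub>L real) \<Rightarrow> ereal)
     \<Rightarrow> 'a \<times> ('a \<Rightarrow>\<^sub>L real) \<Rightarrow> ereal" where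
  "Ainf h = (\<lambda>z. INF n \<in> {1..}. (Aop ^^ n) h z)"

definition edom :: "('b \<Rightarrow> ereal) \<Rightarrow> 'b set" where
  "edom g = {z. g z < \<infinity>}"

end

theory Submission imports Defs begin

lemma half_sum: fixes x y :: ereal assumes "x > -\<infinity>" "y > -\<infinity>"
  shows "(x+y)/2 = (if x = \<infinity> \<or> y = \<infinity> then \<infinity> else ereal ((real_of_ereal x + real_of_ereal y)/2))"
  using assms by (cases x; cases y) auto

definition aa :: "'a::real_normed_vector \<times> ('a \<Rightarrow>\<^sub>L real) \<Rightarrow> 'a \<times> ('a \<Rightarrow>\<^sub>L real) \<Rightarrow> real" where
 "aa z w = blinfun_apply (snd z) (fst w) + blinfun_apply (snd w) (fst z)"

lemma conj_eq: "fconj f (iswap z) = (SUP w. ereal (aa z w) - f w)"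
  by (simp add: fconj_def iswap_def aa_def case_prod_beta)

lemma fy: "ereal (aa z w) - f w \<le> fconj f (iswap z)"
  unfolding conj_eq by (rule SUP_upper) simp

lemma conj_le: "(\<And>w. ereal (aa z w) - f w \<le> c) \<Longrightarrow> fconj f (iswap z) \<le> c"
  unfolding conj_eq by (rule SUP_least)

lemma aa_sym: "aa z w = aa w z" by (simp add: aa_def)

lemma anti: "(\<And>w. f w \<le> g w) \<Longrightarrow> fconj g (iswap z) \<le> fconj f (iswap z)"
  by (rule conj_le, rule order_trans[OF _ fy], rule ereal_minus_mono) auto

lemma Aop_eq: "Aop f z = (f z + fconj f (iswap z)) / 2"
  by (simp add: Aop_def)

lemma Astep:
  assumes f: "\<And>z. f z > -\<infinity>" and Tf: "\<And>z. fconj f (iswap z) > -\<infinity>"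
    and le: "\<And>z. fconj f (iswap z) \<le> f z"
  shows "Aop f z > -\<infinity>" "Aop f z \<le> f z" "fconj (Aop f) (iswap z) \<le> Aop f z"
proof -
  show "Aop f z > -\<infinity>" unfolding Aop_eq half_sum[OF f Tf] by simp
  show "Aop f z \<le> f z" unfolding Aop_eq half_sum[OF f Tf] using le[of z] f[of z] Tf[of z]
    by (cases "f z"; cases "fconj f (iswap z)") auto
  show "fconj (Aop f) (iswap z) \<le> Aop f z"
  proof (rule conj_le)
    fix w
    have 1: "ereal (aa z w) - f w \<le> fconj f (iswap z)" by (rule fy)
    have 2: "ereal (aa z w) - f z \<le> fconj f (iswap w)" using fy[of w z f] by (simp add: aa_sym)
    show "ereal (aa z w) - Aop f w \<le> Aop f z"
      unfolding Aop_eq half_sum[OF f Tf] using 1 2 f[of z] Tf[of z] f[of w] Tf[of w]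
      by (cases "f z"; cases "fconj f (iswap z)"; cases "f w"; cases "fconj f (iswap w)") (auto simp: field_simps)
  qed
qed

lemma iter:
  fixes h :: "'a::real_normed_vector \<times> ('a \<Rightarrow>\<^sub>L real) \<Rightarrow> ereal"
  assumes hm: "\<And>z. h z > -\<infinity>" and Thm: "\<And>z. fconj h (iswap z) > -\<infinity>"
    and le: "\<And>z. fconj h (iswap z) \<le> h z"
  shows "\<forall>z. (Aop^^n) h z > -\<infinity> \<and> fconj ((Aop^^n) h) (iswap z) \<le> (Aop^^n) h z
     \<and> (Aop^^n) h z \<le> h z \<and> fconj h (iswap z) \<le> fconj ((Aop^^n) h) (iswap z)
     \<and> (Aop^^(Suc n)) h z \<le> (Aop^^n) h z"
proof (induction n)
  case 0
  have "Aop h z \<le> h z" for z by (rule Astep(2)[OF hm Thm le])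
  then show ?case using hm le by simp
next
  case (Suc n)
  define f where "f = (Aop^^n) h"
  have f1: "\<And>z. f z > -\<infinity>" and f2: "\<And>z. fconj f (iswap z) \<le> f z" and f3: "\<And>z. f z \<le> h z"
    and f4: "\<And>z. fconj h (iswap z) \<le> fconj f (iswap z)"
    using Suc.IH unfolding f_def by auto
  have f5: "\<And>z. fconj f (iswap z) > -\<infinity>" using f4 Thm less_le_trans by blast
  have g1: "\<And>z. Aop f z > -\<infinity>" and g2: "\<And>z. fconj (Aop f) (iswap z) \<le> Aop f z"
    and g3: "\<And>z. Aop f z \<le> f z"
    using Astep[OF f1 f5 f2] by auto
  have g4: "\<And>z. Aop f z \<le> h z" using g3 f3 order_trans by blast
  have g5: "\<And>z. fconj h (iswap z) \<le> fconj (Aop f) (iswap z)" by (rule anti) (rule g4)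
  have g6: "\<And>z. fconj (Aop f) (iswap z) > -\<infinity>" using g5 Thm less_le_trans by blast
  have g7: "\<And>z. Aop (Aop f) z \<le> Aop f z" using Astep(2)[OF g1 g6 g2] by blast
  show ?case using g1 g2 g4 g5 g7 unfolding f_def by simp
qed

lemma gap:
  fixes h :: "'a::real_normed_vector \<times> ('a \<Rightarrow>\<^sub>L real) \<Rightarrow> ereal"
  assumes hm: "\<And>z. h z > -\<infinity>" and Thm: "\<And>z. fconj h (iswap z) > -\<infinity>"
    and le: "\<And>z. fconj h (iswap z) \<le> h z" and fin: "h z < \<infinity>"
  shows "\<bar>(Aop^^n) h z\<bar> \<noteq> \<infinity> \<and> \<bar>fconj ((Aop^^n) h) (iswap z)\<bar> \<noteq> \<infinity> \<and>
    real_of_ereal ((Aop^^n) h z) - real_of_ereal (fconj ((Aop^^n) h) (iswap z))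
     \<le> (real_of_ereal (h z) - real_of_ereal (fconj h (iswap z))) / 2^n"
proof (induction n)
  case 0
  then show ?case using hm[of z] Thm[of z] le[of z] fin by auto
next
  case (Suc n)
  define f where "f = (Aop^^n) h"
  have I: "\<forall>z. f z > -\<infinity> \<and> fconj f (iswap z) \<le> f z
     \<and> f z \<le> h z \<and> fconj h (iswap z) \<le> fconj f (iswap z) \<and> Aop f z \<le> f z"
    using iter[OF hm Thm le, of n] unfolding f_def by simp
  have I2: "\<forall>z. Aop f z > -\<infinity> \<and> fconj (Aop f) (iswap z) \<le> Aop f z
     \<and> Aop f z \<le> h z \<and> fconj h (iswap z) \<le> fconj (Aop f) (iswap z)"
    using iter[OF hm Thm le, of "Suc n"] unfolding f_def by simp
  have mono: "fconj f (iswap z) \<le> fconj (Aop f) (iswap z)" by (rule anti) (use I in auto)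
  obtain a b where ab: "f z = ereal a" "fconj f (iswap z) = ereal b"
    using Suc.IH unfolding f_def by force
  have Af: "Aop f z = ereal ((a+b)/2)" unfolding Aop_eq using ab by simp
  obtain c where c: "fconj (Aop f) (iswap z) = ereal c"
  proof -
    have "fconj (Aop f) (iswap z) \<le> Aop f z" using I2 by blast
    then show ?thesis using that mono Af ab by (cases "fconj (Aop f) (iswap z)") auto
  qed
  have "b \<le> c" using mono ab c by simp
  moreover have "a - b \<le> (real_of_ereal (h z) - real_of_ereal (fconj h (iswap z))) / 2^n"
    using Suc.IH ab unfolding f_def by simp
  ultimately have "(a+b)/2 - c \<le> (real_of_ereal (h z) - real_of_ereal (fconj h (iswap z))) / 2^(Suc n)"
  proof -
    assume bc: "b \<le> c" and ab2: "a - b \<le> (real_of_ereal (h z) - real_of_ereal (fconj h (iswap z))) / 2^n"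
    have "(a+b)/2 - c \<le> (a - b)/2" using bc by (simp add: field_simps)
    also have "\<dots> \<le> ((real_of_ereal (h z) - real_of_ereal (fconj h (iswap z))) / 2^n) / 2"
      using divide_right_mono[OF ab2, of 2] by simp
    finally show ?thesis by simp
  qed
  moreover have eq: "(Aop^^Suc n) h = Aop f" by (simp add: f_def)
  ultimately show ?case unfolding eq using Af c by simp
qed

lemma small_le0:
  fixes d K :: real
  assumes "\<And>n::nat. d \<le> K / 2^n"
  shows "d \<le> 0"
proof (rule ccontr)
  assume "\<not> d \<le> 0"
  hence d: "d > 0" by simp
  obtain n :: nat where n: "K / d < 2^n" using real_arch_pow[of 2 "K/d"] by auto
  have "K < d * 2^n" using n d by (simp add: field_simps)
  hence "K / 2^n < d" by (simp add: field_simps)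
  with assms[of n] show False by simp
qed

theorem corollary2p1:
  fixes h :: "'a::banach \<times> ('a \<Rightarrow>\<^sub>L real) \<Rightarrow> ereal"
  assumes "reflexive_space TYPE('a)"
    and "h \<in> fitz_all"
    and "\<forall>z. (fconj h \<circ> iswap) z \<le> h z"
    and "edom h = edom (fconj h \<circ> iswap)"
  shows "fconj (Ainf h) \<circ> iswap = Ainf h"
proof -
  have hm: "\<And>z. h z > -\<infinity>"
  proof -
    fix z
    have "h z \<ge> pairing z" using assms(2) unfolding fitz_all_def fitz_family_def by blast
    thus "h z > -\<infinity>" unfolding pairing_def by (metis MInfty_neq_ereal(2) ereal_infty_less(2) order_less_le_trans)
  qed
  have le: "\<And>z. fconj h (iswap z) \<le> h z" using assms(3) by (metis comp_apply)
  have domeq: "\<And>z. h z < \<infinity> \<longleftrightarrow> fconj h (iswap z) < \<infinity>"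
    using assms(4) unfolding edom_def by (auto simp: set_eq_iff)
  obtain z0 where z0: "h z0 < \<infinity>"
  proof (cases "\<exists>z0. h z0 < \<infinity>")
    case True then show ?thesis using that by blast
  next
    case False
    hence inf: "\<And>z. h z = \<infinity>" by auto
    have "fconj h (iswap z) \<le> -\<infinity>" for z by (rule conj_le) (simp add: inf)
    hence "fconj h (iswap z) < \<infinity>" for z by (metis ereal_infty_less(2) MInfty_neq_PInfty(1) order_le_less_trans not_less_iff_gr_or_eq)
    with domeq inf show ?thesis by auto
  qed
  have Thm: "\<And>z. fconj h (iswap z) > -\<infinity>"
  proof -
    fix z
    have "ereal (aa z z0) - h z0 \<le> fconj h (iswap z)" by (rule fy)
    moreover have "ereal (aa z z0) - h z0 > -\<infinity>" using z0 hm[of z0] by (cases "h z0") auto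
    ultimately show "fconj h (iswap z) > -\<infinity>" using order_less_le_trans by blast
  qed
  define H where "H n = (Aop^^n) h" for n
  define g where "g = Ainf h"
  have gdef: "g z = (INF n\<in>{1..}. H n z)" for z by (simp add: g_def Ainf_def H_def)
  have It: "H n z > -\<infinity> \<and> fconj (H n) (iswap z) \<le> H n z
     \<and> H n z \<le> h z \<and> fconj h (iswap z) \<le> fconj (H n) (iswap z)
     \<and> H (Suc n) z \<le> H n z" for n z
    using iter[OF hm Thm le, of n] unfolding H_def by blast
  have Hanti: "m \<le> k \<Longrightarrow> H k z \<le> H m z" for m k z
    by (rule lift_Suc_antimono_le[of "\<lambda>n. H n z"]) (use It in auto)
  have gle: "1 \<le> n \<Longrightarrow> g z \<le> H n z" for n z unfolding gdef by (rule INF_lower) simp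
  have gleh: "g z \<le> h z" for z using gle[of 1 z] It[of 1 z] by auto
  have gleH: "g z \<le> H n z" for n z
  proof (cases n)
    case 0 then show ?thesis using gleh by (simp add: H_def)
  next
    case (Suc m) then show ?thesis using gle by simp
  qed
  have TgeH: "fconj (H n) (iswap z) \<le> fconj g (iswap z)" for n z
    by (rule anti) (rule gleH)
  have A: "fconj g (iswap z) \<le> g z" for z
  proof (rule conj_le)
    fix w
    show "ereal (aa z w) - g w \<le> g z"
      unfolding gdef[of z]
    proof (rule INF_greatest)
      fix m :: nat assume m: "m \<in> {1..}"
      show "ereal (aa z w) - g w \<le> H m z"
      proof (cases "H m z")
        case PInf then show ?thesis by simp
      next
        case MInf then show ?thesis using It[of m z] by simp
      next
        case (real r)
        have "ereal (aa z w - r) \<le> g w" unfolding gdef[of w]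
        proof (rule INF_greatest)
          fix n :: nat assume n: "n \<in> {1..}"
          define k where "k = max m n"
          have "ereal (aa z w - r) = ereal (aa w z) - ereal r" by (simp add: aa_sym)
          also have "\<dots> \<le> ereal (aa w z) - H k z"
            using Hanti[of m k z] real by (intro ereal_minus_mono) (auto simp: k_def)
          also have "\<dots> \<le> fconj (H k) (iswap w)" by (rule fy)
          also have "\<dots> \<le> H k w" using It by blast
          also have "\<dots> \<le> H n w" using Hanti[of n k w] by (simp add: k_def)
          finally show "ereal (aa z w - r) \<le> H n w" .
        qed
        then show ?thesis using real by (cases "g w") auto
      qed
    qed
  qed
  have B: "g z \<le> fconj g (iswap z)" for z
  proof (cases "h z < \<infinity>")
    case False
    hence "fconj h (iswap z) = \<infinity>" using domeq[of z] by simp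
    hence "fconj g (iswap z) = \<infinity>" using TgeH[of 0 z] by (simp add: H_def)
    then show ?thesis by simp
  next
    case True
    note G = gap[OF hm Thm le True]
    define K where "K = real_of_ereal (h z) - real_of_ereal (fconj h (iswap z))"
    have gfin: "\<bar>g z\<bar> \<noteq> \<infinity>"
    proof -
      have "g z \<ge> fconj g (iswap z)" by (rule A)
      moreover have "fconj g (iswap z) \<ge> fconj h (iswap z)" using TgeH[of 0 z] by (simp add: H_def)
      ultimately have "g z > -\<infinity>" using Thm[of z] by (meson order_less_le_trans)
      moreover have "g z < \<infinity>" using gleh[of z] True by (meson order_le_less_trans)
      ultimately show ?thesis by auto
    qed
    have Tfin: "\<bar>fconj g (iswap z)\<bar> \<noteq> \<infinity>"
    proof -
      have "fconj g (iswap z) \<ge> fconj h (iswap z)" using TgeH[of 0 z] by (simp add: H_def)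
      hence "fconj g (iswap z) > -\<infinity>" using Thm[of z] by (meson order_less_le_trans)
      moreover have "fconj g (iswap z) < \<infinity>" using A[of z] gfin by auto
      ultimately show ?thesis by auto
    qed
    obtain x y where xy: "g z = ereal x" "fconj g (iswap z) = ereal y" using gfin Tfin by auto
    have "x - y \<le> K / 2^n" for n
    proof -
      have f: "\<bar>H n z\<bar> \<noteq> \<infinity>" "\<bar>fconj (H n) (iswap z)\<bar> \<noteq> \<infinity>"
        and d: "real_of_ereal (H n z) - real_of_ereal (fconj (H n) (iswap z)) \<le> K / 2^n"
        using G[of n] unfolding H_def K_def by auto
      obtain p q where pq: "H n z = ereal p" "fconj (H n) (iswap z) = ereal q" using f by auto
      have "x \<le> p" using gleH[of z n] xy pq by simp
      moreover have "q \<le> y" using TgeH[of n z] xy pq by simp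
      ultimately show ?thesis using d pq by simp
    qed
    hence "x - y \<le> 0" by (rule small_le0)
    then show ?thesis using xy by simp
  qed
  have "fconj g (iswap z) = g z" for z using A B by (rule antisym)
  then show ?thesis unfolding g_def[symmetric] by (auto simp: fun_eq_iff)
qed

end
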